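(* Let $\rho\in(0,+\infty)$ and $\xi\in\mathbb{R}$. On $(r,\phi)\in(0,+\infty)\times\mathbb{S}^1$ with conjugate momenta $(P_r,P_\phi)$ consider $$H_0=\frac{1}{2(1+\rho r^2)}\Big(P_r^2+\frac{P_\phi^2}{r^2}+\xi r^2\Big),$$ associated with the metric $g=(1+\rho r^2)(dr^2+r^2d\phi^2)$, and the quadratic functions $$S_1=\cos(2\phi)\,P_r\frac{P_\phi}{r}+\sin(2\phi)\Big(H_0-\frac{P_\phi^2}{r^2}\Big),\qquad S_2=-\sin(2\phi)\,P_r\frac{P_\phi}{r}+\cos(2\phi)\Big(H_0-\frac{P_\phi^2}{r^2}\Big).$$ Then the superintegrable systems $\{H_0,P_\phi,S_1\}$ and $\{H_0,P_\phi,S_2\}$ (the metric and the functions $H_0,P_\phi,S_1,S_2$) are globally defined on a manifold $M$ diffeomorphic to $\mathbb{R}^2$.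
   Context: $(r,\phi)$ are polar coordinates; the manifold is obtained by adding the origin, i.e. using Cartesian coordinates $x_1=r\cos\phi$, $x_2=r\sin\phi$. *)

theory Defs
  imports "HOL-Analysis.Analysis"
begin

fun Ck_on :: "nat \<Rightarrow> 'a::euclidean_space set \<Rightarrow> ('a \<Rightarrow> real) \<Rightarrow> bool" where
  "Ck_on 0 S f = continuous_on S f"
| "Ck_on (Suc k) S f =
     ((\<forall>x\<in>S. f differentiable (at x)) \<and>
      (\<forall>v. Ck_on k S (\<lambda>x. frechet_derivative f (at x) v)))"

definition smooth_on :: "'a::euclidean_space set \<Rightarrow> ('a \<Rightarrow> real) \<Rightarrow> bool" where
  "smooth_on S f \<longleftrightarrow> (\<forall>k. Ck_on k S f)"

definition H0 :: "real \<Rightarrow> real \<Rightarrow> real \<Rightarrow> real \<Rightarrow> real \<Rightarrow> real \<Rightarrow> real" where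
  "H0 \<rho> \<xi> r \<phi> Pr Pphi =
     (Pr^2 + Pphi^2 / r^2 + \<xi> * r^2) / (2 * (1 + \<rho> * r^2))"

definition Pphi_fun :: "real \<Rightarrow> real \<Rightarrow> real \<Rightarrow> real \<Rightarrow> real" where
  "Pphi_fun r \<phi> Pr Pphi = Pphi"

definition S1 :: "real \<Rightarrow> real \<Rightarrow> real \<Rightarrow> real \<Rightarrow> real \<Rightarrow> real \<Rightarrow> real" where
  "S1 \<rho> \<xi> r \<phi> Pr Pphi =
     cos (2*\<phi>) * Pr * Pphi / r + sin (2*\<phi>) * (H0 \<rho> \<xi> r \<phi> Pr Pphi - Pphi^2 / r^2)"

definition S2 :: "real \<Rightarrow> real \<Rightarrow> real \<Rightarrow> real \<Rightarrow> real \<Rightarrow> real \<Rightarrow> real" where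
  "S2 \<rho> \<xi> r \<phi> Pr Pphi =
     - sin (2*\<phi>) * Pr * Pphi / r + cos (2*\<phi>) * (H0 \<rho> \<xi> r \<phi> Pr Pphi - Pphi^2 / r^2)"

text \<open>Cotangent lift of the polar coordinate map: a point (r,phi,P_r,P_phi) with r > 0
  corresponds to the Cartesian point ((x1,x2),(p1,p2)) with x = (r cos phi, r sin phi)
  and p = P_r (cos phi, sin phi) + (P_phi / r) (- sin phi, cos phi).\<close>
definition polar_to_cart :: "real \<Rightarrow> real \<Rightarrow> real \<Rightarrow> real \<Rightarrow> (real \<times> real) \<times> (real \<times> real)" where
  "polar_to_cart r \<phi> Pr Pphi =
     ((r * cos \<phi>, r * sin \<phi>),
      (Pr * cos \<phi> - Pphi / r * sin \<phi>, Pr * sin \<phi> + Pphi / r * cos \<phi>))"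

definition global_extension ::
  "((real \<times> real) \<times> (real \<times> real) \<Rightarrow> real) \<Rightarrow> (real \<Rightarrow> real \<Rightarrow> real \<Rightarrow> real \<Rightarrow> real) \<Rightarrow> bool" where
  "global_extension F f \<longleftrightarrow> smooth_on UNIV F \<and>
     (\<forall>r \<phi> Pr Pphi. r > 0 \<longrightarrow> F (polar_to_cart r \<phi> Pr Pphi) = f r \<phi> Pr Pphi)"

end

theory Submission
  imports Defs
begin

lemma Ck_const: "Ck_on k UNIV (\<lambda>x. c)"
proof (induction k arbitrary: c)
  case 0 then show ?case by simp
next
  case (Suc k)
  have "frechet_derivative (\<lambda>x::'a. c) (at x) = (\<lambda>h. 0)" for x
    by (rule frechet_derivative_at[symmetric]) (rule has_derivative_const)
  then show ?case using Suc by simp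
qed

lemma Ck_linear: "bounded_linear f \<Longrightarrow> Ck_on k UNIV f"
proof (induction k)
  case 0 then show ?case by (simp add: linear_continuous_on)
next
  case (Suc k)
  have "frechet_derivative f (at x) = f" for x
    by (rule frechet_derivative_at[symmetric]) (rule bounded_linear_imp_has_derivative[OF Suc.prems])
  moreover have "f differentiable (at x)" for x
    using bounded_linear_imp_has_derivative[OF Suc.prems] differentiable_def by blast
  ultimately show ?case by (simp add: Ck_const)
qed

lemma Ck_mono: "Ck_on (Suc k) UNIV f \<Longrightarrow> Ck_on k UNIV f"
proof (induction k arbitrary: f)
  case 0 then show ?case
    by (simp add: continuous_at_imp_continuous_on differentiable_imp_continuous_within)
next
  case (Suc k) then show ?case by simp
qed

lemma fd_add:
  assumes "f differentiable (at x)" "g differentiable (at x)"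
  shows "frechet_derivative (\<lambda>x. f x + g x) (at x) h
     = frechet_derivative f (at x) h + frechet_derivative g (at x) h"
proof -
  have "((\<lambda>x. f x + g x) has_derivative (\<lambda>h. frechet_derivative f (at x) h + frechet_derivative g (at x) h)) (at x)"
    using assms by (intro has_derivative_add) (simp_all add: frechet_derivative_works[symmetric])
  from frechet_derivative_at[OF this] show ?thesis by metis
qed

lemma Ck_add: "Ck_on k UNIV f \<Longrightarrow> Ck_on k UNIV g \<Longrightarrow> Ck_on k UNIV (\<lambda>x. f x + g x)"
proof (induction k arbitrary: f g)
  case 0 then show ?case by (simp add: continuous_on_add)
next
  case (Suc k)
  have df: "\<And>x. f differentiable (at x)" and dg: "\<And>x. g differentiable (at x)"
    using Suc.prems by auto
  have eq: "(\<lambda>x. frechet_derivative (\<lambda>x. f x + g x) (at x) v)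
      = (\<lambda>x. frechet_derivative f (at x) v + frechet_derivative g (at x) v)" for v
    using fd_add[OF df dg] by auto
  show ?case using Suc.prems Suc.IH df dg by (simp add: eq)
qed

lemma fd_mult:
  fixes f g :: "'a::real_normed_vector \<Rightarrow> real"
  assumes "f differentiable (at x)" "g differentiable (at x)"
  shows "frechet_derivative (\<lambda>x. f x * g x) (at x) h
     = f x * frechet_derivative g (at x) h + frechet_derivative f (at x) h * g x"
proof -
  have "((\<lambda>x. f x * g x) has_derivative (\<lambda>h. f x * frechet_derivative g (at x) h + frechet_derivative f (at x) h * g x)) (at x)"
    using assms by (intro has_derivative_mult) (simp_all add: frechet_derivative_works[symmetric])
  from frechet_derivative_at[OF this] show ?thesis by metis
qed

lemma Ck_mult: "Ck_on k UNIV f \<Longrightarrow> Ck_on k UNIV g \<Longrightarrow> Ck_on k UNIV (\<lambda>x. f x * g x)"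
proof (induction k arbitrary: f g)
  case 0 then show ?case by (simp add: continuous_on_mult)
next
  case (Suc k)
  have df: "\<And>x. f differentiable (at x)" and dg: "\<And>x. g differentiable (at x)"
    using Suc.prems by auto
  have eq: "(\<lambda>x. frechet_derivative (\<lambda>x. f x * g x) (at x) v)
      = (\<lambda>x. f x * frechet_derivative g (at x) v + frechet_derivative f (at x) v * g x)" for v
    using fd_mult[OF df dg] by auto
  have fk: "Ck_on k UNIV f" and gk: "Ck_on k UNIV g" using Suc.prems Ck_mono by blast+
  have "Ck_on k UNIV (\<lambda>x. f x * frechet_derivative g (at x) v + frechet_derivative f (at x) v * g x)" for v
    apply (rule Ck_add)
     apply (rule Suc.IH[OF fk]) using Suc.prems apply simp
    apply (rule Suc.IH[OF _ gk]) using Suc.prems apply simp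
    done
  then show ?case using df dg by (simp add: eq differentiable_mult)
qed

lemma fd_inverse:
  fixes f :: "'a::real_normed_vector \<Rightarrow> real"
  assumes "f differentiable (at x)" "f x \<noteq> 0"
  shows "frechet_derivative (\<lambda>x. inverse (f x)) (at x) h
     = - (inverse (f x) * frechet_derivative f (at x) h * inverse (f x))"
proof -
  have "((\<lambda>x. inverse (f x)) has_derivative (\<lambda>h. - (inverse (f x) * frechet_derivative f (at x) h * inverse (f x)))) (at x)"
    using assms by (intro Deriv.has_derivative_inverse) (simp_all add: frechet_derivative_works[symmetric])
  from frechet_derivative_at[OF this] show ?thesis by metis
qed

lemma Ck_neg: "Ck_on k UNIV f \<Longrightarrow> Ck_on k UNIV (\<lambda>x. - f x :: real)"
  using Ck_mult[OF Ck_const[of k "-1"], of f] by simp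

lemma Ck_inverse: "Ck_on k UNIV f \<Longrightarrow> (\<forall>x. f x \<noteq> (0::real)) \<Longrightarrow> Ck_on k UNIV (\<lambda>x. inverse (f x))"
proof (induction k arbitrary: f)
  case 0 then show ?case by (simp add: continuous_on_inverse)
next
  case (Suc k)
  have df: "\<And>x. f differentiable (at x)" using Suc.prems by auto
  have eq: "(\<lambda>x. frechet_derivative (\<lambda>x. inverse (f x)) (at x) v)
      = (\<lambda>x. - (inverse (f x) * frechet_derivative f (at x) v * inverse (f x)))" for v
    using fd_inverse[OF df] Suc.prems by auto
  have fk: "Ck_on k UNIV f" using Suc.prems Ck_mono by blast
  have ik: "Ck_on k UNIV (\<lambda>x. inverse (f x))" using Suc.IH[OF fk] Suc.prems by blast
  have "Ck_on k UNIV (\<lambda>x. - (inverse (f x) * frechet_derivative f (at x) v * inverse (f x)))" for v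
    apply (rule Ck_neg)
    apply (rule Ck_mult[OF Ck_mult[OF ik] ik])
    using Suc.prems by simp
  then show ?case using df Suc.prems by (simp add: eq differentiable_inverse)
qed

lemma sm_const[intro]: "smooth_on UNIV (\<lambda>x. c)"
  by (simp add: smooth_on_def Ck_const)
lemma sm_linear: "bounded_linear f \<Longrightarrow> smooth_on UNIV f"
  by (simp add: smooth_on_def Ck_linear)
lemma sm_add[intro]: "smooth_on UNIV f \<Longrightarrow> smooth_on UNIV g \<Longrightarrow> smooth_on UNIV (\<lambda>x. f x + g x)"
  by (simp add: smooth_on_def Ck_add)
lemma sm_mult[intro]: "smooth_on UNIV f \<Longrightarrow> smooth_on UNIV g \<Longrightarrow> smooth_on UNIV (\<lambda>x. f x * g x)"
  by (simp add: smooth_on_def Ck_mult)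
lemma sm_neg[intro]: "smooth_on UNIV f \<Longrightarrow> smooth_on UNIV (\<lambda>x. - f x :: real)"
  by (simp add: smooth_on_def Ck_neg)
lemma sm_diff[intro]: "smooth_on UNIV f \<Longrightarrow> smooth_on UNIV g \<Longrightarrow> smooth_on UNIV (\<lambda>x. f x - g x :: real)"
  using sm_add[OF _ sm_neg, of f g] by simp
lemma sm_inverse[intro]: "smooth_on UNIV f \<Longrightarrow> (\<forall>x. f x \<noteq> (0::real)) \<Longrightarrow> smooth_on UNIV (\<lambda>x. inverse (f x))"
  by (simp add: smooth_on_def Ck_inverse)
lemma sm_divide[intro]: "smooth_on UNIV f \<Longrightarrow> smooth_on UNIV g \<Longrightarrow> (\<forall>x. g x \<noteq> (0::real)) \<Longrightarrow> smooth_on UNIV (\<lambda>x. f x / g x)"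
  using sm_mult[OF _ sm_inverse, of f g] by (simp add: divide_inverse)
lemma sm_power[intro]: "smooth_on UNIV f \<Longrightarrow> smooth_on UNIV (\<lambda>x. f x ^ n :: real)"
  by (induction n) auto

lemma sm_fst[intro]: "smooth_on UNIV fst"
  by (rule sm_linear) (rule bounded_linear_fst)
lemma sm_snd[intro]: "smooth_on UNIV snd"
  by (rule sm_linear) (rule bounded_linear_snd)
lemma sm_ff[intro]: "smooth_on UNIV (\<lambda>x. fst (fst x))"
  by (rule sm_linear) (intro bounded_linear_compose[OF bounded_linear_fst] bounded_linear_fst)
lemma sm_sf[intro]: "smooth_on UNIV (\<lambda>x. snd (fst x))"
  by (rule sm_linear) (intro bounded_linear_compose[OF bounded_linear_snd] bounded_linear_fst)
lemma sm_fs[intro]: "smooth_on UNIV (\<lambda>x. fst (snd x))"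
  by (rule sm_linear) (intro bounded_linear_compose[OF bounded_linear_fst] bounded_linear_snd)
lemma sm_ss[intro]: "smooth_on UNIV (\<lambda>x. snd (snd x))"
  by (rule sm_linear) (intro bounded_linear_compose[OF bounded_linear_snd] bounded_linear_snd)


lemma trig_id: "cos \<phi> ^ 2 + sin \<phi> ^ 2 = (1::real)" by simp

lemma pos_den: "(\<rho>::real) > 0 \<Longrightarrow> 1 + \<rho> * (a^2 + b^2) > 0"
  by (simp add: add_pos_nonneg)

lemma l1: fixes c s P q r \<rho> \<xi> :: real
 assumes "c^2+s^2=1" "1+\<rho>*r^2 > 0"
 shows "(P*c - q* s)*(P* s+q*c) + (r*c)*(r* s)*(\<xi> - \<rho>*((P*c - q* s)^2+(P* s+q*c)^2))/(1+\<rho>*((r*c)^2+(r* s)^2))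
   = (c^2-s^2)*P*q + (2* s*c)*((P^2+q^2+\<xi>*r^2)/(2*(1+\<rho>*r^2)) - q^2)"
proof -
  have a: "(r*c)^2+(r* s)^2 = r^2" "(P*c - q* s)^2+(P* s+q*c)^2 = P^2+q^2" using assms(1) by algebra+
  show ?thesis unfolding a using assms(2) by (simp add: field_simps) algebra
qed
lemma l2: fixes c s P q r \<rho> \<xi> :: real
 assumes "c^2+s^2=1" "1+\<rho>*r^2 > 0"
 shows "((P*c - q* s)^2-(P* s+q*c)^2)/2 + ((r*c)^2-(r* s)^2)*(\<xi> - \<rho>*((P*c - q* s)^2+(P* s+q*c)^2))/(2*(1+\<rho>*((r*c)^2+(r* s)^2)))
   = -(2* s*c)*P*q + (c^2-s^2)*((P^2+q^2+\<xi>*r^2)/(2*(1+\<rho>*r^2)) - q^2)"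
proof -
  have a: "(r*c)^2+(r* s)^2 = r^2" "(P*c - q* s)^2+(P* s+q*c)^2 = P^2+q^2" using assms(1) by algebra+
  show ?thesis unfolding a using assms(2) by (simp add: field_simps) algebra
qed

lemma pdL: "(\<rho>::real) > 0 \<Longrightarrow> 1 + \<rho> * (a^2 + b^2) > 0"
  by (rule pos_den)
lemma pd2L: "(\<rho>::real) > 0 \<Longrightarrow> \<forall>z. 1 + \<rho> * (a z^2 + b z^2) \<noteq> 0"
  "(\<rho>::real) > 0 \<Longrightarrow> \<forall>z. 2 * (1 + \<rho> * (a z^2 + b z^2)) \<noteq> 0"
  using pos_den[of \<rho>] by (smt (verit))+

theorem theorem7:
  fixes \<rho> \<xi> :: real
  assumes "\<rho> > 0"
  shows
    \<comment> \<open>the metric extends to a smooth Riemannian metric g11 dx1^2 + 2 g12 dx1 dx2 + g22 dx2^2 on R^2\<close>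
    "(\<exists>g11 g12 g22 :: real \<times> real \<Rightarrow> real.
        smooth_on UNIV g11 \<and> smooth_on UNIV g12 \<and> smooth_on UNIV g22 \<and>
        (\<forall>x. g11 x > 0 \<and> g11 x * g22 x - (g12 x)^2 > 0) \<and>
        (\<forall>r \<phi> a b. r > 0 \<longrightarrow>
           (let x = (r * cos \<phi>, r * sin \<phi>);
                u1 = a * cos \<phi> - r * b * sin \<phi>;
                u2 = a * sin \<phi> + r * b * cos \<phi>
            in g11 x * u1^2 + 2 * g12 x * u1 * u2 + g22 x * u2^2
               = (1 + \<rho> * r^2) * (a^2 + r^2 * b^2)))) \<and>
     (\<exists>F. global_extension F (H0 \<rho> \<xi>)) \<and>
     (\<exists>F. global_extension F Pphi_fun) \<and>
     (\<exists>F. global_extension F (S1 \<rho> \<xi>)) \<and>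
     (\<exists>F. global_extension F (S2 \<rho> \<xi>))"
proof (intro conjI)
  let ?g = "\<lambda>x::real\<times>real. 1 + \<rho> * (fst x ^ 2 + snd x ^ 2)"
  show "\<exists>g11 g12 g22 :: real \<times> real \<Rightarrow> real.
        smooth_on UNIV g11 \<and> smooth_on UNIV g12 \<and> smooth_on UNIV g22 \<and>
        (\<forall>x. g11 x > 0 \<and> g11 x * g22 x - (g12 x)^2 > 0) \<and>
        (\<forall>r \<phi> a b. r > 0 \<longrightarrow>
           (let x = (r * cos \<phi>, r * sin \<phi>);
                u1 = a * cos \<phi> - r * b * sin \<phi>;
                u2 = a * sin \<phi> + r * b * cos \<phi>
            in g11 x * u1^2 + 2 * g12 x * u1 * u2 + g22 x * u2^2
               = (1 + \<rho> * r^2) * (a^2 + r^2 * b^2)))"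
  proof (rule exI[of _ ?g], rule exI[of _ "\<lambda>x. 0"], rule exI[of _ ?g], intro conjI allI impI)
    show "smooth_on UNIV ?g" by (intro sm_add sm_mult sm_const sm_power sm_fst sm_snd)
    show "smooth_on UNIV (\<lambda>x::real\<times>real. 0::real)" by (rule sm_const)
    show "smooth_on UNIV ?g" by (intro sm_add sm_mult sm_const sm_power sm_fst sm_snd)
    fix x :: "real\<times>real"
    show "?g x > 0" using pdL[OF assms] by simp
    show "?g x * ?g x - 0^2 > 0" using pdL[OF assms] by simp
  next
    fix r \<phi> a b :: real
    assume "r > 0"
    have e1: "(r * cos \<phi>)^2 + (r * sin \<phi>)^2 = r^2"
      by (metis distrib_left mult.right_neutral power_mult_distrib trig_id)
    have e2: "(a * cos \<phi> - r * b * sin \<phi>)^2 + (a * sin \<phi> + r * b * cos \<phi>)^2 = a^2 + r^2*b^2"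
      using trig_id[of \<phi>] by algebra
    show "let x = (r * cos \<phi>, r * sin \<phi>);
                u1 = a * cos \<phi> - r * b * sin \<phi>;
                u2 = a * sin \<phi> + r * b * cos \<phi>
            in ?g x * u1^2 + 2 * 0 * u1 * u2 + ?g x * u2^2
               = (1 + \<rho> * r^2) * (a^2 + r^2 * b^2)"
      unfolding Let_def using e1 e2 by (simp add: distrib_left[symmetric])
  qed
next
  show "\<exists>F. global_extension F (H0 \<rho> \<xi>)"
    unfolding global_extension_def
  proof (rule exI[of _ "\<lambda>z. ((fst (snd z))^2 + (snd (snd z))^2 + \<xi>*((fst (fst z))^2+(snd (fst z))^2)) / (2*(1+\<rho>*((fst (fst z))^2+(snd (fst z))^2)))"], intro conjI allI impI)
    show "smooth_on UNIV (\<lambda>z. ((fst (snd z))^2 + (snd (snd z))^2 + \<xi>*((fst (fst z))^2+(snd (fst z))^2)) / (2*(1+\<rho>*((fst (fst z))^2+(snd (fst z))^2))))" by (intro sm_add sm_diff sm_mult sm_divide sm_power sm_const sm_ff sm_fs sm_sf sm_ss pd2L[OF assms]) (simp_all)?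
  next
    fix r \<phi> Pr Pphi :: real
    assume r: "r > 0"
    have cs: "cos \<phi> ^ 2 + sin \<phi> ^ 2 = 1" by simp
    have D: "1 + \<rho> * r^2 > 0" using pdL[OF assms, of r 0] by simp
    have a: "(r*cos \<phi>)^2+(r* sin \<phi>)^2 = r^2" "(Pr*cos \<phi> - Pphi/r* sin \<phi>)^2+(Pr* sin \<phi>+Pphi/r*cos \<phi>)^2 = Pr^2+(Pphi/r)^2" using cs by algebra+
    show "(\<lambda>z. ((fst (snd z))^2 + (snd (snd z))^2 + \<xi>*((fst (fst z))^2+(snd (fst z))^2)) / (2*(1+\<rho>*((fst (fst z))^2+(snd (fst z))^2)))) (polar_to_cart r \<phi> Pr Pphi) = H0 \<rho> \<xi> r \<phi> Pr Pphi"
      unfolding polar_to_cart_def H0_def using a by (simp add: power_divide)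
  qed
next
  show "\<exists>F. global_extension F Pphi_fun"
    unfolding global_extension_def
  proof (rule exI[of _ "\<lambda>z. (fst (fst z)) * (snd (snd z)) - (snd (fst z)) * (fst (snd z))"], intro conjI allI impI)
    show "smooth_on UNIV (\<lambda>z. (fst (fst z)) * (snd (snd z)) - (snd (fst z)) * (fst (snd z)))" by (intro sm_add sm_diff sm_mult sm_divide sm_power sm_const sm_ff sm_fs sm_sf sm_ss pd2L[OF assms]) (simp_all)?
  next
    fix r \<phi> Pr Pphi :: real
    assume r: "r > 0"
    have cs: "cos \<phi> ^ 2 + sin \<phi> ^ 2 = 1" by simp
    have "r * cos \<phi> * (Pr * sin \<phi> + Pphi / r * cos \<phi>) - r * sin \<phi> * (Pr * cos \<phi> - Pphi / r * sin \<phi>) = Pphi"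
      using r cs by (simp add: field_simps, algebra)
    then show "(\<lambda>z. (fst (fst z)) * (snd (snd z)) - (snd (fst z)) * (fst (snd z))) (polar_to_cart r \<phi> Pr Pphi) = Pphi_fun r \<phi> Pr Pphi"
      unfolding polar_to_cart_def Pphi_fun_def using cs by simp
  qed
next
  show "\<exists>F. global_extension F (S1 \<rho> \<xi>)"
    unfolding global_extension_def
  proof (rule exI[of _ "\<lambda>z. (fst (snd z))*(snd (snd z)) + (fst (fst z))*(snd (fst z))*(\<xi> - \<rho>*((fst (snd z))^2+(snd (snd z))^2))/(1+\<rho>*((fst (fst z))^2+(snd (fst z))^2))"], intro conjI allI impI)
    show "smooth_on UNIV (\<lambda>z. (fst (snd z))*(snd (snd z)) + (fst (fst z))*(snd (fst z))*(\<xi> - \<rho>*((fst (snd z))^2+(snd (snd z))^2))/(1+\<rho>*((fst (fst z))^2+(snd (fst z))^2)))" by (intro sm_add sm_diff sm_mult sm_divide sm_power sm_const sm_ff sm_fs sm_sf sm_ss pd2L[OF assms]) (simp_all)?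
  next
    fix r \<phi> Pr Pphi :: real
    assume r: "r > 0"
    have cs: "cos \<phi> ^ 2 + sin \<phi> ^ 2 = 1" by simp
    have D: "1 + \<rho> * r^2 > 0" using pdL[OF assms, of r 0] by simp
    show "(\<lambda>z. (fst (snd z))*(snd (snd z)) + (fst (fst z))*(snd (fst z))*(\<xi> - \<rho>*((fst (snd z))^2+(snd (snd z))^2))/(1+\<rho>*((fst (fst z))^2+(snd (fst z))^2))) (polar_to_cart r \<phi> Pr Pphi) = S1 \<rho> \<xi> r \<phi> Pr Pphi"
      unfolding polar_to_cart_def S1_def H0_def cos_double sin_double
      using l1[OF cs D, of Pr "Pphi/r" \<xi>] by (simp add: power_divide mult.assoc)
  qed
next
  show "\<exists>F. global_extension F (S2 \<rho> \<xi>)"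
    unfolding global_extension_def
  proof (rule exI[of _ "\<lambda>z. ((fst (snd z))^2-(snd (snd z))^2)/2 + ((fst (fst z))^2-(snd (fst z))^2)*(\<xi> - \<rho>*((fst (snd z))^2+(snd (snd z))^2))/(2*(1+\<rho>*((fst (fst z))^2+(snd (fst z))^2)))"], intro conjI allI impI)
    show "smooth_on UNIV (\<lambda>z. ((fst (snd z))^2-(snd (snd z))^2)/2 + ((fst (fst z))^2-(snd (fst z))^2)*(\<xi> - \<rho>*((fst (snd z))^2+(snd (snd z))^2))/(2*(1+\<rho>*((fst (fst z))^2+(snd (fst z))^2))))" by (intro sm_add sm_diff sm_mult sm_divide sm_power sm_const sm_ff sm_fs sm_sf sm_ss pd2L[OF assms]) (simp_all)?
  next
    fix r \<phi> Pr Pphi :: real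
    assume r: "r > 0"
    have cs: "cos \<phi> ^ 2 + sin \<phi> ^ 2 = 1" by simp
    have D: "1 + \<rho> * r^2 > 0" using pdL[OF assms, of r 0] by simp
    show "(\<lambda>z. ((fst (snd z))^2-(snd (snd z))^2)/2 + ((fst (fst z))^2-(snd (fst z))^2)*(\<xi> - \<rho>*((fst (snd z))^2+(snd (snd z))^2))/(2*(1+\<rho>*((fst (fst z))^2+(snd (fst z))^2)))) (polar_to_cart r \<phi> Pr Pphi) = S2 \<rho> \<xi> r \<phi> Pr Pphi"
      unfolding polar_to_cart_def S2_def H0_def cos_double sin_double
      using l2[OF cs D, of Pr "Pphi/r" \<xi>] by (simp add: power_divide mult.assoc)
  qed
qed

end
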